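(* Let $d\ge1$ and let $(\gamma_1,w_1)$ be a weighted Marcinkiewicz–Zygmund curve of order $1$ on $\mathbb S^d$ with constants $0<a\le A$. Then \[ \ell(\gamma_1)\ge 2\sqrt{d+1}\,\frac{d+1}{d+2}\Big(\frac aA\Big)^{3/2}. \]
   Context: $\mathbb S^d\subset\mathbb R^{d+1}$ is the unit sphere with normalized surface measure (total mass $1$). $\Pi_1$ is the space of restrictions to $\mathbb S^d$ of polynomials in $d+1$ variables of degree at most $1$. A curve is a continuous, piecewise smooth, closed map $\gamma:[0,L]\to\mathbb S^d$ parametrized by arc length, with length $\ell(\gamma)=L$ and $\int_\gamma g:=\int_0^Lg(\gamma(u))\,du$. A weighted Marcinkiewicz–Zygmund curve of order $t$ is a pair $(\gamma_t,w_t)$ of such a curve and a nonnegative weight $w_t$ integrable on its trajectory with $a\|f\|_{L^2(\mathbb S^d)}^2\le\frac1{\ell(\gamma_t)}\int_{\gamma_t}|f|^2w_t\le A\|f\|_{L^2(\mathbb S^d)}^2$ for all $f\in\Pi_t$. *)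

theory Defs
  imports "HOL-Analysis.Analysis"
begin

text \<open>Normalized surface measure on the unit sphere of a Euclidean space:
  the push-forward of the normalized Lebesgue measure on the open unit ball under
  the radial projection x \<mapsto> x / |x| (cone-measure description of the
  normalized surface measure; total mass 1).\<close>
definition sphere_measure :: "'a::euclidean_space measure" where
  "sphere_measure = distr (uniform_measure lborel (ball 0 1)) borel (\<lambda>x. x /\<^sub>R norm x)"

definition sphere_L2_sq :: "('a::euclidean_space \<Rightarrow> real) \<Rightarrow> real" where
  "sphere_L2_sq f = (\<integral>x. (f x)\<^sup>2 \<partial>sphere_measure)"

definition Pi1 :: "('a::euclidean_space \<Rightarrow> real) set" where
  "Pi1 = {f. \<exists>c b. \<forall>x. f x = c + b \<bullet> x}"

definition sphere_curve :: "(real \<Rightarrow> 'a::euclidean_space) \<Rightarrow> real \<Rightarrow> bool" where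
  "sphere_curve \<gamma> L \<longleftrightarrow>
     0 \<le> L \<and> \<gamma> ` {0..L} \<subseteq> sphere 0 1 \<and>
     continuous_on {0..L} \<gamma> \<and>
     \<gamma> piecewise_C1_differentiable_on {0..L} \<and>
     \<gamma> 0 = \<gamma> L \<and>
     (\<exists>S. finite S \<and> (\<forall>u\<in>{0<..<L} - S.
         \<gamma> differentiable (at u) \<and> norm (vector_derivative \<gamma> (at u)) = 1))"

definition MZ_curve_1 ::
  "(real \<Rightarrow> 'a::euclidean_space) \<Rightarrow> real \<Rightarrow> ('a \<Rightarrow> real) \<Rightarrow> real \<Rightarrow> real \<Rightarrow> bool" where
  "MZ_curve_1 \<gamma> L w a A \<longleftrightarrow>
     sphere_curve \<gamma> L \<and>
     (\<forall>u\<in>{0..L}. 0 \<le> w (\<gamma> u)) \<and>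
     (\<lambda>u. w (\<gamma> u)) integrable_on {0..L} \<and>
     (\<forall>f\<in>Pi1.
        a * sphere_L2_sq f \<le> (1 / L) * integral {0..L} (\<lambda>u. (f (\<gamma> u))\<^sup>2 * w (\<gamma> u)) \<and>
        (1 / L) * integral {0..L} (\<lambda>u. (f (\<gamma> u))\<^sup>2 * w (\<gamma> u)) \<le> A * sphere_L2_sq f)"

end

theory Submission
  imports Defs
begin


abbreviation UB :: "'a::euclidean_space measure" where
  "UB \<equiv> uniform_measure lborel (ball (0::'a) 1)"

lemma ball_vol: "emeasure lborel (ball (0::'a::euclidean_space) 1) = ennreal (unit_ball_vol (DIM('a)))"
  by (simp add: emeasure_ball)

lemma UB_space_1: "emeasure (UB::'a::euclidean_space measure) (space UB) = 1"
proof -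
  have p: "unit_ball_vol (real DIM('a::euclidean_space)) > 0" by simp
  have "emeasure (UB::'a measure) (space UB) = emeasure lborel (ball (0::'a) 1 \<inter> UNIV) / emeasure lborel (ball (0::'a) 1)"
    by (subst emeasure_uniform_measure) auto
  also have "\<dots> = 1"
  proof -
    have "ennreal (unit_ball_vol (DIM('a))) / ennreal (unit_ball_vol (DIM('a))) = ennreal 1"
      using p by (subst divide_ennreal) (auto simp: less_le)
    then show ?thesis by (simp add: ball_vol)
  qed
  finally show ?thesis .
qed

lemma UB_finite: "finite_measure (UB::'a::euclidean_space measure)"
  by (rule finite_measureI) (subst UB_space_1, simp)

lemma UB_measure_space: "measure (UB::'a::euclidean_space measure) (space UB) = 1"
  using UB_space_1 by (simp add: measure_def)



definition sw :: "'a \<Rightarrow> 'a \<Rightarrow> 'a \<Rightarrow> 'a" where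
  "sw i j b = (if b = i then j else if b = j then i else b)"

definition SwT :: "'a::euclidean_space \<Rightarrow> 'a \<Rightarrow> 'a \<Rightarrow> 'a" where
  "SwT i j x = (\<Sum>b\<in>Basis. (x \<bullet> sw i j b) *\<^sub>R b)"

lemma sw_Basis: "i \<in> Basis \<Longrightarrow> j \<in> Basis \<Longrightarrow> b \<in> Basis \<Longrightarrow> sw i j b \<in> Basis"
  by (auto simp: sw_def)

lemma sw_sw: "sw i j (sw i j b) = b"
  by (auto simp: sw_def)

lemma SwT_inner:
  fixes i j :: "'a::euclidean_space"
  assumes "i \<in> Basis" "j \<in> Basis" "c \<in> Basis"
  shows "SwT i j x \<bullet> c = x \<bullet> sw i j c"
proof -
  have "SwT i j x \<bullet> c = (\<Sum>b\<in>Basis. (x \<bullet> sw i j b) * (b \<bullet> c))"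
    by (simp add: SwT_def inner_sum_left)
  also have "\<dots> = (\<Sum>b\<in>Basis. if b = c then x \<bullet> sw i j b else 0)"
    using assms by (intro sum.cong) (auto simp: inner_Basis)
  also have "\<dots> = x \<bullet> sw i j c" using assms by simp
  finally show ?thesis .
qed

lemma SwT_norm:
  fixes i j :: "'a::euclidean_space"
  assumes "i \<in> Basis" "j \<in> Basis"
  shows "norm (SwT i j x) = norm x"
proof -
  have "(norm (SwT i j x))\<^sup>2 = (\<Sum>c\<in>Basis. (SwT i j x \<bullet> c)\<^sup>2)"
    unfolding power2_norm_eq_inner by (subst euclidean_inner) (simp add: power2_eq_square)
  also have "\<dots> = (\<Sum>c\<in>Basis. (x \<bullet> sw i j c)\<^sup>2)"
    using assms by (intro sum.cong) (auto simp: SwT_inner)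
  also have "\<dots> = (\<Sum>c\<in>Basis. (x \<bullet> c)\<^sup>2)"
  proof (rule sum.reindex_bij_witness[where i="sw i j" and j="sw i j"])
  qed (use assms in \<open>auto simp: sw_sw sw_Basis\<close>)
  also have "\<dots> = (norm x)\<^sup>2"
    unfolding power2_norm_eq_inner by (subst (2) euclidean_inner) (simp add: power2_eq_square)
  finally show ?thesis by (simp add: power2_eq_iff_nonneg)
qed

lemma SwT_meas[measurable]: "SwT i j \<in> borel_measurable borel"
  unfolding SwT_def by measurable

lemma lborel_swap:
  fixes i j :: "'a::euclidean_space"
  assumes ij: "i \<in> Basis" "j \<in> Basis"
  shows "lborel = distr lborel borel (SwT i j)"
proof (rule lborel_eqI)
  fix l u :: 'a assume le: "\<And>b. b \<in> Basis \<Longrightarrow> l \<bullet> b \<le> u \<bullet> b"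
  have pre: "SwT i j -` box l u = box (SwT i j l) (SwT i j u)"
  proof -
    have "x \<in> box l u \<longleftrightarrow> SwT i j x \<in> box (SwT i j l) (SwT i j u)" for x
    proof -
      have "(\<forall>b\<in>Basis. l \<bullet> b < x \<bullet> b \<and> x \<bullet> b < u \<bullet> b) \<longleftrightarrow>
            (\<forall>b\<in>Basis. l \<bullet> sw i j b < x \<bullet> sw i j b \<and> x \<bullet> sw i j b < u \<bullet> sw i j b)"
      proof
        assume H: "\<forall>b\<in>Basis. l \<bullet> b < x \<bullet> b \<and> x \<bullet> b < u \<bullet> b"
        show "\<forall>b\<in>Basis. l \<bullet> sw i j b < x \<bullet> sw i j b \<and> x \<bullet> sw i j b < u \<bullet> sw i j b"
        proof
          fix b :: 'a assume "b \<in> Basis"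
          then have "sw i j b \<in> Basis" using ij sw_Basis by blast
          then show "l \<bullet> sw i j b < x \<bullet> sw i j b \<and> x \<bullet> sw i j b < u \<bullet> sw i j b" using H by blast
        qed
      next
        assume H: "\<forall>b\<in>Basis. l \<bullet> sw i j b < x \<bullet> sw i j b \<and> x \<bullet> sw i j b < u \<bullet> sw i j b"
        show "\<forall>b\<in>Basis. l \<bullet> b < x \<bullet> b \<and> x \<bullet> b < u \<bullet> b"
        proof
          fix b :: 'a assume "b \<in> Basis"
          then have "sw i j b \<in> Basis" using ij sw_Basis by blast
          then have "l \<bullet> sw i j (sw i j b) < x \<bullet> sw i j (sw i j b) \<and> x \<bullet> sw i j (sw i j b) < u \<bullet> sw i j (sw i j b)" using H by blast
          then show "l \<bullet> b < x \<bullet> b \<and> x \<bullet> b < u \<bullet> b" by (simp only: sw_sw)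
        qed
      qed
      then show ?thesis using ij by (simp add: mem_box SwT_inner)
    qed
    moreover have "SwT i j (SwT i j x) = x" for x
      by (rule euclidean_eqI) (use ij in \<open>simp add: SwT_inner sw_Basis sw_sw\<close>)
    ultimately show ?thesis
    proof -
      assume H: "\<And>x. x \<in> box l u \<longleftrightarrow> SwT i j x \<in> box (SwT i j l) (SwT i j u)"
         and I: "\<And>x. SwT i j (SwT i j x) = x"
      show ?thesis
      proof (rule set_eqI)
        fix y
        have "SwT i j y \<in> box l u \<longleftrightarrow> SwT i j (SwT i j y) \<in> box (SwT i j l) (SwT i j u)" by (rule H)
        then show "y \<in> SwT i j -` box l u \<longleftrightarrow> y \<in> box (SwT i j l) (SwT i j u)" by (simp add: I)
      qed
    qed
  qed
  have "emeasure (distr lborel borel (SwT i j)) (box l u) = emeasure lborel (box (SwT i j l) (SwT i j u))"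
    by (simp add: emeasure_distr pre)
  also have "\<dots> = (\<Prod>b\<in>Basis. (SwT i j u - SwT i j l) \<bullet> b)"
    using ij le by (intro emeasure_lborel_box) (simp add: SwT_inner sw_Basis)
  also have "(\<Prod>b\<in>Basis. (SwT i j u - SwT i j l) \<bullet> b) = (\<Prod>b\<in>Basis. (u - l) \<bullet> sw i j b)"
    using ij by (intro prod.cong) (auto simp: inner_diff_left SwT_inner)
  also have "\<dots> = (\<Prod>b\<in>Basis. (u - l) \<bullet> b)"
  proof (rule prod.reindex_bij_witness[where i="sw i j" and j="sw i j"])
  qed (use ij in \<open>auto simp: sw_sw sw_Basis\<close>)
  finally show "emeasure (distr lborel borel (SwT i j)) (box l u) = (\<Prod>b\<in>Basis. (u - l) \<bullet> b)" .
qed simp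

definition RfT :: "'a::euclidean_space \<Rightarrow> 'a \<Rightarrow> 'a" where
  "RfT i x = x - (2 * (x \<bullet> i)) *\<^sub>R i"

lemma RfT_meas[measurable]: "RfT i \<in> borel_measurable borel"
  unfolding RfT_def by measurable

lemma lborel_reflect:
  fixes i :: "'a::euclidean_space"
  assumes i: "i \<in> Basis"
  shows "lborel = distr lborel borel (RfT i)"
proof -
  define c where "c = (\<lambda>j::'a. if j = i then -1 else (1::real))"
  have T: "(\<lambda>x. 0 + (\<Sum>j\<in>Basis. (c j * (x \<bullet> j)) *\<^sub>R j)) = RfT i"
  proof
    fix x :: 'a
    show "0 + (\<Sum>j\<in>Basis. (c j * (x \<bullet> j)) *\<^sub>R j) = RfT i x"
    proof (rule euclidean_eqI)
      fix b :: 'a assume b: "b \<in> Basis"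
      have "(\<Sum>j\<in>Basis. (c j * (x \<bullet> j)) *\<^sub>R j) \<bullet> b = (\<Sum>j\<in>Basis. if j = b then c j * (x \<bullet> j) else 0)"
        unfolding inner_sum_left using b by (intro sum.cong) (auto simp: inner_Basis)
      also have "\<dots> = c b * (x \<bullet> b)" using b by simp
      finally have "(\<Sum>j\<in>Basis. (c j * (x \<bullet> j)) *\<^sub>R j) \<bullet> b = c b * (x \<bullet> b)" .
      then show "(0 + (\<Sum>j\<in>Basis. (c j * (x \<bullet> j)) *\<^sub>R j)) \<bullet> b = RfT i x \<bullet> b"
        using b i by (auto simp: c_def RfT_def inner_diff_left inner_Basis)
    qed
  qed
  have p: "(\<Prod>j\<in>Basis. \<bar>c j\<bar>) = 1" by (rule prod.neutral) (simp add: c_def)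
  have "lborel = density (distr lborel borel (\<lambda>x. 0 + (\<Sum>j\<in>Basis. (c j * (x \<bullet> j)) *\<^sub>R j))) (\<lambda>_. (\<Prod>j\<in>Basis. \<bar>c j\<bar>))"
    by (rule lborel_affine_euclidean) (simp add: c_def)
  then show ?thesis unfolding T p by (simp add: density_1)
qed

lemma RfT_norm:
  fixes i :: "'a::euclidean_space"
  assumes "i \<in> Basis"
  shows "norm (RfT i x) = norm x"
proof -
  have "(norm (RfT i x))\<^sup>2 = (norm x)\<^sup>2"
    using assms by (simp add: RfT_def power2_norm_eq_inner inner_diff_left inner_diff_right inner_commute algebra_simps)
  then show ?thesis by (simp add: power2_eq_iff_nonneg)
qed



lemma sets_UB[simp]: "sets (UB::'a::euclidean_space measure) = sets borel"
  by simp

lemma meas_UB_cong: "f \<in> borel_measurable borel \<Longrightarrow> f \<in> borel_measurable (UB::'a::euclidean_space measure)"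
  by (simp add: measurable_cong_sets[OF sets_UB refl])

lemma UB_invariant:
  fixes T :: "'a::euclidean_space \<Rightarrow> 'a"
  assumes L: "lborel = distr lborel borel T" and T: "T \<in> borel_measurable borel"
    and N: "\<And>x. norm (T x) = norm x"
  shows "distr UB borel T = UB"
proof (rule measure_eqI)
  show "sets (distr UB borel T) = sets UB" by simp
  fix A assume A: "A \<in> sets (distr UB borel T)"
  then have Ab: "A \<in> sets borel" by simp
  have TU: "T \<in> measurable UB borel" using meas_UB_cong[OF T] .
  have pre: "T -` (ball 0 1 \<inter> A) = ball 0 1 \<inter> T -` A" using N by auto
  have pre2: "T -` ball 0 1 = ball 0 1" using N by auto
  have "emeasure (distr UB borel T) A = emeasure UB (T -` A \<inter> space UB)"
    using TU Ab by (rule emeasure_distr)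
  also have "\<dots> = emeasure lborel (ball 0 1 \<inter> (T -` A)) / emeasure lborel (ball (0::'a) 1)"
    using Ab T by (subst emeasure_uniform_measure) (auto simp: measurable_sets_borel)
  also have "emeasure lborel (ball 0 1 \<inter> (T -` A)) = emeasure (distr lborel borel T) (ball 0 1 \<inter> A)"
    using Ab T by (subst emeasure_distr) (auto simp: pre2)
  also have "\<dots> = emeasure lborel (ball 0 1 \<inter> A)" using L by simp
  also have "emeasure lborel (ball 0 1 \<inter> A) / emeasure lborel (ball (0::'a) 1) = emeasure UB A"
    using Ab by (subst emeasure_uniform_measure) auto
  finally show "emeasure (distr UB borel T) A = emeasure UB A" .
qed

lemma integral_UB_inv:
  fixes T :: "'a::euclidean_space \<Rightarrow> 'a" and g :: "'a \<Rightarrow> real"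
  assumes L: "lborel = distr lborel borel T" and T: "T \<in> borel_measurable borel"
    and N: "\<And>x. norm (T x) = norm x" and g: "g \<in> borel_measurable borel"
  shows "integral\<^sup>L UB (\<lambda>x. g (T x)) = integral\<^sup>L UB g"
proof -
  have "integral\<^sup>L UB (\<lambda>x. g (T x)) = integral\<^sup>L (distr UB borel T) g"
    using meas_UB_cong[OF T] g by (rule integral_distr[symmetric])
  also have "\<dots> = integral\<^sup>L UB g" by (simp add: UB_invariant[OF L T N])
  finally show ?thesis .
qed

definition nz :: "'a::euclidean_space \<Rightarrow> 'a" where "nz x = x /\<^sub>R norm x"

lemma nz_meas[measurable]: "nz \<in> borel_measurable borel"
  unfolding nz_def by measurable

lemma norm_nz_le: "norm (nz x) \<le> 1"
  by (cases "x = 0") (auto simp: nz_def)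

lemma SwT_scale: "i \<in> Basis \<Longrightarrow> j \<in> Basis \<Longrightarrow> SwT i j (c *\<^sub>R x) = c *\<^sub>R SwT i j x"
  by (rule euclidean_eqI) (simp add: SwT_inner sw_Basis)

lemma nz_SwT: "i \<in> Basis \<Longrightarrow> j \<in> Basis \<Longrightarrow> nz (SwT i j x) = SwT i j (nz x)"
  by (simp add: nz_def SwT_norm SwT_scale)

lemma nz_RfT: "nz (RfT i x) = RfT i (nz x)" if "i \<in> Basis"
  using that by (simp add: nz_def RfT_norm) (simp add: RfT_def algebra_simps)

definition CC :: "'a::euclidean_space \<Rightarrow> 'a \<Rightarrow> real" where
  "CC i j = integral\<^sup>L UB (\<lambda>x. (nz x \<bullet> i) * (nz x \<bullet> j))"

lemma integrable_CC: "i \<in> Basis \<Longrightarrow> j \<in> Basis \<Longrightarrow> integrable UB (\<lambda>x::'a::euclidean_space. (nz x \<bullet> i) * (nz x \<bullet> j))"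
proof (rule finite_measure.integrable_const_bound[OF UB_finite, where B=1])
  assume ij: "i \<in> Basis" "j \<in> Basis"
  show "AE x in UB. norm ((nz x \<bullet> i) * (nz x \<bullet> j)) \<le> 1"
  proof (rule AE_I2)
    fix x :: 'a
    have a: "\<bar>nz x \<bullet> i\<bar> \<le> 1" using Basis_le_norm[OF ij(1), of "nz x"] norm_nz_le[of x] by linarith
    have b: "\<bar>nz x \<bullet> j\<bar> \<le> 1" using Basis_le_norm[OF ij(2), of "nz x"] norm_nz_le[of x] by linarith
    show "norm ((nz x \<bullet> i) * (nz x \<bullet> j)) \<le> 1"
      using mult_mono[OF a b] by (simp add: abs_mult)
  qed
  show "(\<lambda>x. (nz x \<bullet> i) * (nz x \<bullet> j)) \<in> borel_measurable UB"
    by (rule meas_UB_cong) measurable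
qed

lemma CC_offdiag:
  fixes i j :: "'a::euclidean_space"
  assumes "i \<in> Basis" "j \<in> Basis" "i \<noteq> j"
  shows "CC i j = (0::real)"
proof -
  have "CC i j = integral\<^sup>L UB (\<lambda>x. (nz (RfT i x) \<bullet> i) * (nz (RfT i x) \<bullet> j))"
    unfolding CC_def
    by (rule integral_UB_inv[OF lborel_reflect[OF assms(1)] RfT_meas RfT_norm[OF assms(1)], symmetric]) measurable
  also have "\<dots> = integral\<^sup>L UB (\<lambda>x. - ((nz x \<bullet> i) * (nz x \<bullet> j)))"
    using assms by (intro Bochner_Integration.integral_cong refl)
       (simp add: nz_RfT, simp add: RfT_def inner_diff_left inner_Basis)
  also have "\<dots> = - CC i j" by (simp add: CC_def)
  finally show ?thesis by simp
qed

lemma CC_diag: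
  fixes i j :: "'a::euclidean_space"
  assumes "i \<in> Basis" "j \<in> Basis"
  shows "CC i i = CC j j"
proof -
  have "CC j j = integral\<^sup>L UB (\<lambda>x. (nz (SwT i j x) \<bullet> j) * (nz (SwT i j x) \<bullet> j))"
    unfolding CC_def
    by (rule integral_UB_inv[OF lborel_swap[OF assms] SwT_meas SwT_norm[OF assms], symmetric]) measurable
  also have "\<dots> = CC i i"
    unfolding CC_def using assms
    by (intro Bochner_Integration.integral_cong refl) (simp add: nz_SwT SwT_inner sw_def)
  finally show ?thesis by simp
qed

lemma CC_sum: "(\<Sum>i\<in>(Basis::'a::euclidean_space set). CC i i) = 1"
proof -
  have S: "integral\<^sup>L UB (\<lambda>x::'a. \<Sum>i\<in>Basis. (nz x \<bullet> i) * (nz x \<bullet> i)) = (\<Sum>i\<in>Basis. integral\<^sup>L UB (\<lambda>x::'a. (nz x \<bullet> i) * (nz x \<bullet> i)))"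
    by (intro Bochner_Integration.integral_sum integrable_CC)
  have "(\<Sum>i\<in>(Basis::'a set). CC i i) = integral\<^sup>L UB (\<lambda>x::'a. \<Sum>i\<in>Basis. (nz x \<bullet> i) * (nz x \<bullet> i))"
    unfolding CC_def S ..
  also have "\<dots> = integral\<^sup>L UB (\<lambda>x::'a. 1)"
  proof (rule integral_cong_AE)
    show "(\<lambda>x::'a. \<Sum>i\<in>Basis. (nz x \<bullet> i) * (nz x \<bullet> i)) \<in> borel_measurable UB"
      by (rule meas_UB_cong) measurable
    show "(\<lambda>x::'a. 1::real) \<in> borel_measurable UB" by simp
    have AEx: "AE x in UB. x \<noteq> (0::'a)"
    proof (rule AE_uniform_measureI)
      show "ball (0::'a) 1 \<in> sets lborel" by simp
      have A0: "AE x in lborel. x \<noteq> (0::'a)" by (rule AE_lborel_singleton)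
      then show "AE x in lborel. x \<in> ball (0::'a) 1 \<longrightarrow> x \<noteq> 0"
        by eventually_elim simp
    qed
    have pt: "\<And>x::'a. x \<noteq> 0 \<Longrightarrow> (\<Sum>i\<in>Basis. (nz x \<bullet> i) * (nz x \<bullet> i)) = 1"
    proof -
      fix x :: 'a assume "x \<noteq> 0"
      have "(\<Sum>i\<in>Basis. (nz x \<bullet> i) * (nz x \<bullet> i)) = nz x \<bullet> nz x"
        by (subst (3) euclidean_inner) simp
      also have "\<dots> = 1" using \<open>x \<noteq> 0\<close> by (simp add: nz_def inner_commute power2_norm_eq_inner[symmetric] field_simps)
      finally show "(\<Sum>i\<in>Basis. (nz x \<bullet> i) * (nz x \<bullet> i)) = 1" .
    qed
    show "AE x in UB. (\<Sum>i\<in>Basis. (nz (x::'a) \<bullet> i) * (nz x \<bullet> i)) = (1::real)"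
      using AEx by (rule AE_mp) (simp add: pt)
  qed
  also have "\<dots> = 1" using UB_measure_space by simp
  finally show ?thesis .
qed

lemma CC_val:
  fixes i :: "'a::euclidean_space"
  assumes i: "i \<in> Basis"
  shows "CC i i = 1 / real DIM('a)"
proof -
  have "(\<Sum>j\<in>(Basis::'a set). CC j j) = (\<Sum>j\<in>(Basis::'a set). CC i i)"
    using i CC_diag by (intro sum.cong) auto
  then have "1 = real DIM('a) * CC i i" using CC_sum[where 'a='a] by simp
  then show ?thesis by (simp add: field_simps)
qed



lemma sphere_L2_sq_UB:
  fixes f :: "'a::euclidean_space \<Rightarrow> real"
  assumes f: "f \<in> borel_measurable borel"
  shows "sphere_L2_sq f = integral\<^sup>L (UB::'a measure) (\<lambda>x. (f (nz x))\<^sup>2)"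
proof -
  have m: "(\<lambda>x::'a. x /\<^sub>R norm x) \<in> measurable UB borel"
    by (rule meas_UB_cong) measurable
  have "sphere_L2_sq f = integral\<^sup>L (distr (UB::'a measure) borel (\<lambda>x. x /\<^sub>R norm x)) (\<lambda>x. (f x)\<^sup>2)"
    by (simp add: sphere_L2_sq_def sphere_measure_def)
  also have "\<dots> = integral\<^sup>L (UB::'a measure) (\<lambda>x. (f (x /\<^sub>R norm x))\<^sup>2)"
    using m by (rule integral_distr) (use f in measurable)
  finally show ?thesis by (simp add: nz_def)
qed

lemma L2_one: "sphere_L2_sq (\<lambda>x::'a::euclidean_space. 1) = 1"
  using UB_measure_space[where 'a='a] by (subst sphere_L2_sq_UB) auto

lemma L2_lin:
  fixes b :: "'a::euclidean_space"
  shows "sphere_L2_sq (\<lambda>x. b \<bullet> x) = (norm b)\<^sup>2 / real DIM('a)"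
proof -
  have e: "(b \<bullet> nz x)\<^sup>2 = (\<Sum>i\<in>Basis. \<Sum>j\<in>Basis. ((b \<bullet> i) * (b \<bullet> j)) * ((nz x \<bullet> i) * (nz x \<bullet> j)))" for x :: 'a
  proof -
    have "b \<bullet> nz x = (\<Sum>i\<in>Basis. (b \<bullet> i) * (nz x \<bullet> i))"
      by (subst euclidean_inner) simp
    then show ?thesis
      by (simp add: power2_eq_square sum_product algebra_simps)
  qed
  have "sphere_L2_sq (\<lambda>x. b \<bullet> x) = integral\<^sup>L (UB::'a measure) (\<lambda>x. (b \<bullet> nz x)\<^sup>2)"
    by (rule sphere_L2_sq_UB) measurable
  also have "\<dots> = integral\<^sup>L (UB::'a measure) (\<lambda>x. \<Sum>i\<in>Basis. \<Sum>j\<in>Basis. ((b \<bullet> i) * (b \<bullet> j)) * ((nz x \<bullet> i) * (nz x \<bullet> j)))"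
    by (simp only: e)
  also have "\<dots> = (\<Sum>i\<in>Basis. \<Sum>j\<in>Basis. ((b \<bullet> i) * (b \<bullet> j)) * CC i j)"
  proof -
    have I: "integrable (UB::'a measure) (\<lambda>x. \<Sum>j\<in>Basis. ((b \<bullet> i) * (b \<bullet> j)) * ((nz x \<bullet> i) * (nz x \<bullet> j)))"
      if "i \<in> Basis" for i
      using that by (intro Bochner_Integration.integrable_sum integrable_mult_right integrable_CC)
    have "integral\<^sup>L (UB::'a measure) (\<lambda>x. \<Sum>i\<in>Basis. \<Sum>j\<in>Basis. ((b \<bullet> i) * (b \<bullet> j)) * ((nz x \<bullet> i) * (nz x \<bullet> j)))
        = (\<Sum>i\<in>Basis. integral\<^sup>L (UB::'a measure) (\<lambda>x. \<Sum>j\<in>Basis. ((b \<bullet> i) * (b \<bullet> j)) * ((nz x \<bullet> i) * (nz x \<bullet> j))))"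
      by (intro Bochner_Integration.integral_sum I)
    also have "\<dots> = (\<Sum>i\<in>Basis. \<Sum>j\<in>Basis. integral\<^sup>L (UB::'a measure) (\<lambda>x. ((b \<bullet> i) * (b \<bullet> j)) * ((nz x \<bullet> i) * (nz x \<bullet> j))))"
      by (intro sum.cong refl Bochner_Integration.integral_sum integrable_mult_right integrable_CC) auto
    also have "\<dots> = (\<Sum>i\<in>Basis. \<Sum>j\<in>Basis. ((b \<bullet> i) * (b \<bullet> j)) * CC i j)"
      by (simp add: CC_def)
    finally show ?thesis .
  qed
  also have "\<dots> = (\<Sum>i\<in>Basis. (b \<bullet> i)\<^sup>2 / real DIM('a))"
  proof (intro sum.cong refl)
    fix i :: 'a assume i: "i \<in> Basis"
    have "(\<Sum>j\<in>Basis. ((b \<bullet> i) * (b \<bullet> j)) * CC i j) = (\<Sum>j\<in>Basis. if j = i then (b \<bullet> i)\<^sup>2 / real DIM('a) else 0)"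
      using i by (intro sum.cong refl) (auto simp: CC_offdiag CC_val power2_eq_square)
    also have "\<dots> = (b \<bullet> i)\<^sup>2 / real DIM('a)" using i by simp
    finally show "(\<Sum>j\<in>Basis. ((b \<bullet> i) * (b \<bullet> j)) * CC i j) = (b \<bullet> i)\<^sup>2 / real DIM('a)" .
  qed
  also have "\<dots> = (norm b)\<^sup>2 / real DIM('a)"
  proof -
    have nb: "(norm b)\<^sup>2 = (\<Sum>i\<in>Basis. (b \<bullet> i)\<^sup>2)"
      unfolding power2_norm_eq_inner by (subst euclidean_inner) (simp add: power2_eq_square)
    show ?thesis by (simp add: nb sum_divide_distrib[symmetric])
  qed
  finally show ?thesis .
qed



lemma bessel:
  fixes B :: "'a::euclidean_space set"
  assumes fin: "finite B" and orth: "pairwise orthogonal B" and nrm: "\<And>b. b \<in> B \<Longrightarrow> norm b = 1"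
  shows "(\<Sum>b\<in>B. (b \<bullet> v)\<^sup>2) \<le> (norm v)\<^sup>2"
proof -
  define p where "p = (\<Sum>b\<in>B. (b \<bullet> v) *\<^sub>R b)"
  have bc: "b \<bullet> c = (if b = c then 1 else 0)" if "b \<in> B" "c \<in> B" for b c
    using that orth nrm[of b] by (auto simp: pairwise_def orthogonal_def power2_norm_eq_inner[symmetric])
  have pb: "p \<bullet> c = c \<bullet> v" if "c \<in> B" for c
  proof -
    have "p \<bullet> c = (\<Sum>b\<in>B. (b \<bullet> v) * (b \<bullet> c))" by (simp add: p_def inner_sum_left)
    also have "\<dots> = (\<Sum>b\<in>B. if b = c then c \<bullet> v else 0)"
      using that by (intro sum.cong refl) (simp add: bc)
    also have "\<dots> = c \<bullet> v" using fin that by simp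
    finally show ?thesis .
  qed
  have pp: "p \<bullet> p = (\<Sum>b\<in>B. (b \<bullet> v)\<^sup>2)"
  proof -
    have "p \<bullet> p = (\<Sum>c\<in>B. (c \<bullet> v) *\<^sub>R c) \<bullet> p" by (simp only: p_def)
    also have "\<dots> = (\<Sum>c\<in>B. (c \<bullet> v) * (c \<bullet> p))" by (simp add: inner_sum_left)
    also have "\<dots> = (\<Sum>c\<in>B. (c \<bullet> v)\<^sup>2)" by (intro sum.cong refl) (simp add: pb inner_commute[of _ p] power2_eq_square)
    finally show ?thesis .
  qed
  have vp: "v \<bullet> p = (\<Sum>b\<in>B. (b \<bullet> v)\<^sup>2)"
    by (simp add: p_def inner_sum_right inner_commute power2_eq_square)
  have "0 \<le> (v - p) \<bullet> (v - p)" by simp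
  also have "\<dots> = v \<bullet> v - 2 * (v \<bullet> p) + p \<bullet> p" by (simp add: inner_diff_left inner_diff_right inner_commute)
  finally show ?thesis using pp vp by (simp add: power2_norm_eq_inner)
qed

lemma curve_lip:
  fixes \<gamma> :: "real \<Rightarrow> 'a::euclidean_space"
  assumes C: "sphere_curve \<gamma> L" and u: "u \<in> {0..L}" and v: "v \<in> {0..L}"
  shows "norm (\<gamma> v - \<gamma> u) \<le> \<bar>v - u\<bar>"
proof -
  obtain S where S: "finite S" and D: "\<And>t. t \<in> {0<..<L} - S \<Longrightarrow> \<gamma> differentiable (at t) \<and> norm (vector_derivative \<gamma> (at t)) = 1"
    using C unfolding sphere_curve_def by blast
  have cont: "continuous_on {0..L} \<gamma>" using C unfolding sphere_curve_def by blast
  have main: "norm (\<gamma> y - \<gamma> x) \<le> y - x" if xy: "x \<le> y" "x \<in> {0..L}" "y \<in> {0..L}" for x y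
  proof -
    define g where "g t = (if t \<in> {x<..<y} - S then vector_derivative \<gamma> (at t) else 0)" for t
    have "(g has_integral (\<gamma> y - \<gamma> x)) {x..y}"
    proof (rule fundamental_theorem_of_calculus_interior_strong[OF S xy(1)])
      fix t assume t: "t \<in> {x<..<y} - S"
      then have "t \<in> {0<..<L} - S" using xy by auto
      then have "\<gamma> differentiable (at t)" using D by blast
      then show "(\<gamma> has_vector_derivative g t) (at t)"
        using t by (simp add: g_def vector_derivative_works)
    next
      show "continuous_on {x..y} \<gamma>" by (rule continuous_on_subset[OF cont]) (use xy in auto)
    qed
    then have "(g has_integral (\<gamma> y - \<gamma> x)) (cbox x y)" by simp
    then have "norm (\<gamma> y - \<gamma> x) \<le> 1 * measure lborel (cbox x y)"
    proof (rule has_integral_bound[OF zero_le_one])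
      fix t assume "t \<in> cbox x y"
      show "norm (g t) \<le> 1"
      proof (cases "t \<in> {x<..<y} - S")
        case True
        then have "t \<in> {0<..<L} - S" using xy by auto
        then show ?thesis using D True by (simp add: g_def)
      next
        case False then have "g t = 0" unfolding g_def by meson
        then show ?thesis by simp
      qed
    qed
    then show ?thesis using xy by simp
  qed
  show ?thesis
  proof (cases "u \<le> v")
    case True then show ?thesis using main[OF True u v] by simp
  next
    case False then show ?thesis using main[of v u] u v by (simp add: norm_minus_commute)
  qed
qed

lemma perp_basis:
  fixes S :: "'a::euclidean_space set"
  assumes "finite S"
  obtains B where "finite B" "pairwise orthogonal B" "\<And>b. b \<in> B \<Longrightarrow> norm b = 1"
    "\<And>b s. b \<in> B \<Longrightarrow> s \<in> S \<Longrightarrow> s \<bullet> b = 0" "card B + card S \<ge> DIM('a)"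
proof -
  define T where "T = {y. \<forall>x\<in>span S. orthogonal x y}"
  have sT: "subspace T" unfolding T_def by (rule subspace_orthogonal_to_vectors)
  have "dim {y \<in> UNIV. \<forall>x\<in>span S. orthogonal x y} + dim (span S) = dim (UNIV::'a set)"
    by (rule dim_subspace_orthogonal_to_vectors) auto
  then have dT: "dim T + dim S = DIM('a)" by (simp add: T_def)
  have "dim S \<le> card S" using assms by (intro dim_le_card) (auto simp: span_superset)
  obtain B where B: "B \<subseteq> T" "pairwise orthogonal B" "\<And>x. x \<in> B \<Longrightarrow> norm x = 1" "independent B" "card B = dim T"
    using orthonormal_basis_subspace[OF sT] by metis
  show ?thesis
  proof (rule that)
    show "finite B" using B(4) by (rule finiteI_independent)
    show "pairwise orthogonal B" by (fact B(2))
    show "norm b = 1" if "b \<in> B" for b using B(3) that .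
    show "s \<bullet> b = 0" if "b \<in> B" "s \<in> S" for b s
      using that B(1) span_superset[of S] by (auto simp: T_def orthogonal_def)
    show "card B + card S \<ge> DIM('a)" using dT B(5) \<open>dim S \<le> card S\<close> by linarith
  qed
qed



lemma core:
  fixes \<gamma> :: "real \<Rightarrow> 'a::euclidean_space" and B :: "'a set"
  assumes MZ: "MZ_curve_1 \<gamma> L w a A" and Lpos: "L > 0"
    and fin: "finite B" and orth: "pairwise orthogonal B" and nrm: "\<And>b. b \<in> B \<Longrightarrow> norm b = 1"
    and cov: "\<And>u. u \<in> {0..L} \<Longrightarrow> \<exists>y. (\<forall>b\<in>B. y \<bullet> b = 0) \<and> norm (\<gamma> u - y) \<le> \<rho>"
  shows "real (card B) * a / real DIM('a) \<le> \<rho>\<^sup>2 * A"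
proof -
  define W where "W u = w (\<gamma> u)" for u
  have C: "sphere_curve \<gamma> L" and wnn: "\<And>u. u \<in> {0..L} \<Longrightarrow> 0 \<le> W u"
    and wint: "W integrable_on {0..L}"
    and mz: "\<And>f. f \<in> Pi1 \<Longrightarrow> a * sphere_L2_sq f \<le> (1 / L) * integral {0..L} (\<lambda>u. (f (\<gamma> u))\<^sup>2 * W u) \<and>
        (1 / L) * integral {0..L} (\<lambda>u. (f (\<gamma> u))\<^sup>2 * W u) \<le> A * sphere_L2_sq f"
    using MZ unfolding MZ_curve_1_def W_def by auto
  have cont: "continuous_on {0..L} \<gamma>" using C unfolding sphere_curve_def by blast
  have wabs: "W absolutely_integrable_on {0..L}"
    by (rule nonnegative_absolutely_integrable_1[OF wint wnn])
  have gint: "(\<lambda>u. (b \<bullet> \<gamma> u)\<^sup>2 * W u) integrable_on {0..L}" for b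
  proof -
    have c2: "continuous_on {0..L} (\<lambda>u. (b \<bullet> \<gamma> u)\<^sup>2)"
      by (intro continuous_intros cont)
    have "(\<lambda>u. (b \<bullet> \<gamma> u)\<^sup>2 * W u) absolutely_integrable_on {0..L}"
    proof (rule absolutely_integrable_bounded_measurable_product_real)
      show "(\<lambda>u. (b \<bullet> \<gamma> u)\<^sup>2) \<in> borel_measurable (lebesgue_on {0..L})"
        by (rule continuous_imp_measurable_on_sets_lebesgue[OF c2]) simp
      show "{0..L} \<in> sets lebesgue" by simp
      show "bounded ((\<lambda>u. (b \<bullet> \<gamma> u)\<^sup>2) ` {0..L})"
        by (rule compact_imp_bounded, rule compact_continuous_image[OF c2]) simp
      show "W absolutely_integrable_on {0..L}" by (fact wabs)
    qed
    then show ?thesis by (simp add: absolutely_integrable_on_def)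
  qed
  have Aone: "(1 / L) * integral {0..L} W \<le> A"
  proof -
    have "(\<lambda>x::'a. 1) \<in> Pi1" unfolding Pi1_def by (rule CollectI, rule exI[of _ 1], rule exI[of _ 0]) simp
    from mz[OF this] show ?thesis by (simp add: L2_one)
  qed
  have each: "a / real DIM('a) \<le> (1 / L) * integral {0..L} (\<lambda>u. (b \<bullet> \<gamma> u)\<^sup>2 * W u)" if b: "b \<in> B" for b
  proof -
    have "(\<lambda>x::'a. b \<bullet> x) \<in> Pi1" unfolding Pi1_def by (rule CollectI, rule exI[of _ 0], rule exI[of _ b]) simp
    from mz[OF this] have "a * sphere_L2_sq (\<lambda>x. b \<bullet> x) \<le> (1 / L) * integral {0..L} (\<lambda>u. (b \<bullet> \<gamma> u)\<^sup>2 * W u)"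
      by simp
    then show ?thesis using nrm[OF b] by (simp add: L2_lin)
  qed
  have "real (card B) * a / real DIM('a) = (\<Sum>b\<in>B. a / real DIM('a))" by simp
  also have "\<dots> \<le> (\<Sum>b\<in>B. (1 / L) * integral {0..L} (\<lambda>u. (b \<bullet> \<gamma> u)\<^sup>2 * W u))"
    by (rule sum_mono) (rule each)
  also have "\<dots> = (1 / L) * integral {0..L} (\<lambda>u. \<Sum>b\<in>B. (b \<bullet> \<gamma> u)\<^sup>2 * W u)"
    by (subst integral_sum[OF fin]) (auto simp: gint sum_distrib_left)
  also have "\<dots> \<le> (1 / L) * integral {0..L} (\<lambda>u. \<rho>\<^sup>2 * W u)"
  proof (rule mult_left_mono)
    show "0 \<le> 1 / L" using Lpos by simp
    show "integral {0..L} (\<lambda>u. \<Sum>b\<in>B. (b \<bullet> \<gamma> u)\<^sup>2 * W u) \<le> integral {0..L} (\<lambda>u. \<rho>\<^sup>2 * W u)"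
    proof (rule integral_le)
      show "(\<lambda>u. \<Sum>b\<in>B. (b \<bullet> \<gamma> u)\<^sup>2 * W u) integrable_on {0..L}"
        by (rule integrable_sum[OF fin]) (rule gint)
      show "(\<lambda>u. \<rho>\<^sup>2 * W u) integrable_on {0..L}"
        using integrable_on_cmult_left[OF wint, of "\<rho>\<^sup>2"] by simp
      fix u assume u: "u \<in> {0..L}"
      obtain y where y: "\<forall>b\<in>B. y \<bullet> b = 0" "norm (\<gamma> u - y) \<le> \<rho>" using cov[OF u] by blast
      have "(\<Sum>b\<in>B. (b \<bullet> \<gamma> u)\<^sup>2) = (\<Sum>b\<in>B. (b \<bullet> (\<gamma> u - y))\<^sup>2)"
        using y(1) by (intro sum.cong refl) (simp add: inner_diff_right inner_commute)
      also have "\<dots> \<le> (norm (\<gamma> u - y))\<^sup>2" by (rule bessel[OF fin orth nrm])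
      also have "\<dots> \<le> \<rho>\<^sup>2" using y(2) by (intro power_mono) auto
      finally have "(\<Sum>b\<in>B. (b \<bullet> \<gamma> u)\<^sup>2) \<le> \<rho>\<^sup>2" .
      then have "(\<Sum>b\<in>B. (b \<bullet> \<gamma> u)\<^sup>2) * W u \<le> \<rho>\<^sup>2 * W u"
        using wnn[OF u] by (rule mult_right_mono)
      then show "(\<Sum>b\<in>B. (b \<bullet> \<gamma> u)\<^sup>2 * W u) \<le> \<rho>\<^sup>2 * W u"
        by (simp add: sum_distrib_right)
    qed
  qed
  also have "\<dots> = \<rho>\<^sup>2 * ((1 / L) * integral {0..L} W)"
    by simp
  also have "\<dots> \<le> \<rho>\<^sup>2 * A"
    by (rule mult_left_mono[OF Aone]) simp
  finally show ?thesis .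
qed



lemma R_sq:
  fixes x r :: real assumes "0 \<le> x" "0 < r"
  shows "(2 * sqrt (x + 1) * ((x + 1) / (x + 2)) * r powr (3/2))\<^sup>2 = 4 * (x+1)^3 / (x+2)^2 * r^3"
proof -
  have "(r powr (3/2))\<^sup>2 = r powr (3/2) * r powr (3/2)" by (simp add: power2_eq_square)
  also have "\<dots> = r powr 3" by (simp add: powr_add[symmetric])
  also have "\<dots> = r ^ 3" using assms by (simp add: powr_realpow)
  finally have p: "(r powr (3/2))\<^sup>2 = r ^ 3" .
  have s: "(sqrt (x + 1))\<^sup>2 = x + 1" using assms by simp
  show ?thesis
    by (simp add: power_mult_distrib p s power_divide) (simp add: field_simps power2_eq_square power3_eq_cube)
qed

lemma final_small:
  fixes x r L :: real
  assumes x: "x \<in> {1,2,3}" and r: "0 < r" "r \<le> 1" and L: "0 \<le> L"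
    and H: "16 * x * r / (x + 1) \<le> L\<^sup>2"
  shows "2 * sqrt (x + 1) * ((x + 1) / (x + 2)) * r powr (3/2) \<le> L"
proof (rule power2_le_imp_le[OF _ L])
  have r3: "r^3 \<le> r" using r by (simp add: power3_eq_cube mult_le_one mult_left_le)
  have c: "4 * (x+1)^3 / (x+2)^2 \<le> 16 * x / (x + 1)"
  proof -
    consider "x = 1" | "x = 2" | "x = 3" using x by blast
    then show ?thesis by cases (simp_all add: divide_simps)
  qed
  have "4 * (x+1)^3 / (x+2)^2 * r^3 \<le> 16 * x / (x + 1) * r"
    by (rule mult_mono[OF c r3]) (use x r in auto)
  also have "\<dots> \<le> L\<^sup>2" using H by simp
  finally show "(2 * sqrt (x + 1) * ((x + 1) / (x + 2)) * r powr (3/2))\<^sup>2 \<le> L\<^sup>2"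
    using R_sq[of x r] x r by auto
qed

lemma poly_big: fixes x :: real assumes "4 \<le> x" shows "(x+1)^4 \<le> 2 * (x-1)^2 * (x+2)^2"
proof -
  have e: "2 * (x-1)^2 * (x+2)^2 - (x+1)^4 = x^4 - 12*x^2 - 12*x + 7"
    by (simp add: algebra_simps power2_eq_square power4_eq_xxxx)
  have "16 * x^2 \<le> x^4"
  proof -
    have "4 * 4 \<le> x * x" by (rule mult_mono) (use assms in auto)
    then have "16 \<le> x^2" by (simp add: power2_eq_square)
    then have "16 * x^2 \<le> x^2 * x^2" by (intro mult_right_mono) auto
    then show ?thesis by (simp add: power4_eq_xxxx power2_eq_square)
  qed
  moreover have "0 \<le> 4 * x * (x - 3)" using assms by simp
  ultimately have "0 \<le> x^4 - 12*x^2 - 12*x + 7" by (simp add: algebra_simps power2_eq_square)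
  then show ?thesis using e by linarith
qed

lemma final_big:
  fixes x r L :: real
  assumes x: "4 \<le> x" and r: "0 < r" "r \<le> 1" and L: "0 \<le> L"
    and H: "8 * (x - 1)^2 * r / (x + 1) \<le> L\<^sup>2"
  shows "2 * sqrt (x + 1) * ((x + 1) / (x + 2)) * r powr (3/2) \<le> L"
proof (rule power2_le_imp_le[OF _ L])
  have r3: "r^3 \<le> r" using r by (simp add: power3_eq_cube mult_le_one mult_left_le)
  have c: "4 * (x+1)^3 / (x+2)^2 \<le> 8 * (x - 1)^2 / (x + 1)"
  proof -
    have "(x+1)^4 \<le> 2 * (x-1)^2 * (x+2)^2" by (rule poly_big[OF x])
    then have "4 * (x+1)^3 * (x+1) \<le> 8 * (x - 1)^2 * (x+2)^2"
      by (simp add: power4_eq_xxxx power3_eq_cube algebra_simps)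
    then have num: "4 * (x+1)^3 * (x+1) - 8 * (x - 1)^2 * (x+2)^2 \<le> 0" by linarith
    have den: "0 < (x+2)^2 * (x+1)" using x by simp
    have "4 * (x+1)^3 / (x+2)^2 - 8 * (x - 1)^2 / (x + 1)
          = (4 * (x+1)^3 * (x+1) - 8 * (x - 1)^2 * (x+2)^2) / ((x+2)^2 * (x+1))"
      using x by (simp add: field_simps)
    also have "\<dots> \<le> 0" using num den by (rule divide_nonpos_pos)
    finally show ?thesis by simp
  qed
  have "4 * (x+1)^3 / (x+2)^2 * r^3 \<le> 8 * (x - 1)^2 / (x + 1) * r"
    by (rule mult_mono[OF c r3]) (use x r in auto)
  also have "\<dots> \<le> L\<^sup>2" using H by simp
  finally show "(2 * sqrt (x + 1) * ((x + 1) / (x + 2)) * r powr (3/2))\<^sup>2 \<le> L\<^sup>2"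
    using R_sq[of x r] x r by auto
qed



theorem mainTheorem6:
  fixes \<gamma> :: "real \<Rightarrow> 'a::euclidean_space" and L :: real and w :: "'a \<Rightarrow> real"
    and a A :: real and d :: nat
  assumes "d \<ge> 1" and "DIM('a) = d + 1"
    and "0 < a" and "a \<le> A"
    and "MZ_curve_1 \<gamma> L w a A"
  shows "L \<ge> 2 * sqrt (real d + 1) * ((real d + 1) / (real d + 2)) * (a / A) powr (3/2)"
proof -
  note MZ = assms(5)
  have C: "sphere_curve \<gamma> L" using MZ unfolding MZ_curve_1_def by blast
  have L0: "0 \<le> L" using C unfolding sphere_curve_def by blast
  have \<gamma>L: "\<gamma> 0 = \<gamma> L" using C unfolding sphere_curve_def by blast
  have Lpos: "0 < L"
  proof (rule ccontr)
    assume "\<not> 0 < L"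
    then have "L = 0" using L0 by simp
    have "(\<lambda>x::'a. 1) \<in> Pi1" unfolding Pi1_def by (rule CollectI, rule exI[of _ 1], rule exI[of _ 0]) simp
    then have "a * sphere_L2_sq (\<lambda>x::'a. 1) \<le> (1 / L) * integral {0..L} (\<lambda>u. ((\<lambda>x::'a. 1) (\<gamma> u))\<^sup>2 * w (\<gamma> u))"
      using MZ unfolding MZ_curve_1_def by blast
    then have "a \<le> 0" using \<open>L = 0\<close> by (simp add: L2_one)
    then show False using assms(3) by simp
  qed
  have Apos: "0 < A" using assms(3,4) by simp
  define r where "r = a / A"
  have r: "0 < r" "r \<le> 1" using assms(3,4) Apos by (auto simp: r_def)
  have lip: "\<And>u v. u \<in> {0..L} \<Longrightarrow> v \<in> {0..L} \<Longrightarrow> norm (\<gamma> v - \<gamma> u) \<le> \<bar>v - u\<bar>"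
    by (rule curve_lip[OF C])
  show ?thesis
  proof (cases "d \<le> 3")
    case True
    define p where "p = (1/2) *\<^sub>R (\<gamma> 0 + \<gamma> (L/2))"
    obtain B :: "'a set" where B: "finite B" "pairwise orthogonal B" "\<And>b. b \<in> B \<Longrightarrow> norm b = 1"
      "\<And>b s. b \<in> B \<Longrightarrow> s \<in> {p} \<Longrightarrow> s \<bullet> b = 0" "card B + card {p} \<ge> DIM('a)"
      using perp_basis[of "{p}"] by auto
    have cB: "card B \<ge> d" using B(5) assms(2) by simp
    have cov: "\<exists>y. (\<forall>b\<in>B. y \<bullet> b = 0) \<and> norm (\<gamma> u - y) \<le> L / 4" if u: "u \<in> {0..L}" for u
    proof (intro exI conjI)
      show "\<forall>b\<in>B. p \<bullet> b = 0" using B(4) by blast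
      have "\<gamma> u - p = (1/2) *\<^sub>R (\<gamma> u - \<gamma> 0) + (1/2) *\<^sub>R (\<gamma> u - \<gamma> (L/2))"
      proof -
        have h: "(1/2::real) *\<^sub>R \<gamma> u + (1/2::real) *\<^sub>R \<gamma> u = \<gamma> u"
          by (simp flip: scaleR_add_left)
        show ?thesis using h by (simp add: p_def algebra_simps)
      qed
      then have "norm (\<gamma> u - p) \<le> (1/2) * norm (\<gamma> u - \<gamma> 0) + (1/2) * norm (\<gamma> u - \<gamma> (L/2))"
        by (metis (no_types, lifting) norm_scaleR norm_triangle_ineq abs_of_pos zero_less_divide_1_iff zero_less_numeral)
      also have "\<dots> \<le> L / 4"
      proof (cases "u \<le> L/2")
        case True
        have "norm (\<gamma> u - \<gamma> 0) \<le> u" using lip[of 0 u] u L0 by auto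
        moreover have "norm (\<gamma> u - \<gamma> (L/2)) \<le> L/2 - u" using lip[of "L/2" u] u L0 True by auto
        ultimately show ?thesis by simp
      next
        case False
        have "norm (\<gamma> u - \<gamma> 0) \<le> L - u" using lip[of L u] u L0 \<gamma>L by auto
        moreover have "norm (\<gamma> u - \<gamma> (L/2)) \<le> u - L/2" using lip[of "L/2" u] u L0 False by auto
        ultimately show ?thesis by simp
      qed
      finally show "norm (\<gamma> u - p) \<le> L / 4" .
    qed
    have core1: "real (card B) * a / real DIM('a) \<le> (L/4)\<^sup>2 * A"
      by (rule core[OF MZ Lpos B(1-3) cov])
    have "real d * a / real (d+1) \<le> real (card B) * a / real (d+1)"
      using cB assms(3) by (intro divide_right_mono mult_right_mono) auto
    also have "\<dots> \<le> (L/4)\<^sup>2 * A" using core1 assms(2) by simp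
    finally have I: "real d * a / real (d+1) \<le> (L/4)\<^sup>2 * A" .
    have "16 * real d * r / (real d + 1) = 16 / A * (real d * a / real (d+1))"
      by (simp add: r_def field_simps)
    also have "\<dots> \<le> 16 / A * ((L/4)\<^sup>2 * A)" by (rule mult_left_mono[OF I]) (use Apos in auto)
    also have "\<dots> = L\<^sup>2" using Apos by (simp add: field_simps power2_eq_square)
    finally have H: "16 * real d * r / (real d + 1) \<le> L\<^sup>2" .
    have x: "real d \<in> {1,2,3}" using True assms(1) by (auto simp: le_Suc_eq numeral_3_eq_3 numeral_2_eq_2)
    show ?thesis using final_small[OF x r L0 H] by (simp add: r_def)
  next
    case False
    then have d4: "d \<ge> 4" by simp
    define N where "N = d - 1"
    have N: "N \<ge> 3" "real N = real d - 1" using d4 by (auto simp: N_def)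
    define S where "S = (\<lambda>j. \<gamma> (real j * L / real N)) ` {..<N}"
    have finS: "finite S" by (simp add: S_def)
    have cS: "card S \<le> N" unfolding S_def using card_image_le[of "{..<N}"] by simp
    obtain B :: "'a set" where B: "finite B" "pairwise orthogonal B" "\<And>b. b \<in> B \<Longrightarrow> norm b = 1"
      "\<And>b s. b \<in> B \<Longrightarrow> s \<in> S \<Longrightarrow> s \<bullet> b = 0" "card B + card S \<ge> DIM('a)"
      using perp_basis[OF finS] by metis
    have cB: "card B \<ge> 2" using B(5) cS assms(2) N by (simp add: N_def)
    have cov: "\<exists>y. (\<forall>b\<in>B. y \<bullet> b = 0) \<and> norm (\<gamma> u - y) \<le> L / (2 * real N)" if u: "u \<in> {0..L}" for u
    proof -
      have Np: "real N > 0" using N by simp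
      define k where "k = nat \<lfloor>u * real N / L + 1/2\<rfloor>"
      have fl0: "0 \<le> \<lfloor>u * real N / L + 1/2\<rfloor>" using u Lpos Np by simp
      have k1: "real k \<le> u * real N / L + 1/2" using fl0 unfolding k_def by linarith
      have k2: "u * real N / L + 1/2 < real k + 1" using fl0 unfolding k_def by linarith
      have uN: "u * real N / L \<le> real N" using u Lpos Np by (simp add: divide_simps mult_right_mono)
      have kN: "k \<le> N" using k1 uN by linarith
      have dist: "\<bar>u - real k * L / real N\<bar> \<le> L / (2 * real N)"
      proof -
        have "\<bar>u * real N / L - real k\<bar> \<le> 1/2" using k1 k2 by linarith
        then have "\<bar>u * real N / L - real k\<bar> * (L / real N) \<le> 1/2 * (L / real N)"
          using Lpos Np by (intro mult_right_mono) auto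
        moreover have "\<bar>u * real N / L - real k\<bar> * (L / real N) = \<bar>u - real k * L / real N\<bar>"
          using Lpos Np by (simp add: abs_mult[symmetric] field_simps)
        ultimately show ?thesis by simp
      qed
      show ?thesis
      proof (cases "k < N")
        case True
        let ?y = "\<gamma> (real k * L / real N)"
        have yS: "?y \<in> S" using True by (simp add: S_def)
        have kin: "real k * L / real N \<in> {0..L}"
          using True Lpos Np by (auto simp: divide_simps)
        have "norm (\<gamma> u - ?y) \<le> \<bar>u - real k * L / real N\<bar>" using lip[OF kin u] .
        then show ?thesis using B(4) yS dist by (intro exI[of _ ?y]) auto
      next
        case False
        then have "k = N" using kN by simp
        have yS: "\<gamma> 0 \<in> S" unfolding S_def by (rule image_eqI[of _ _ 0]) (use N in auto)
        have "norm (\<gamma> u - \<gamma> 0) \<le> \<bar>u - L\<bar>" using lip[of L u] u L0 \<gamma>L by auto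
        also have "\<bar>u - L\<bar> = \<bar>u - real k * L / real N\<bar>" using \<open>k = N\<close> Np by simp
        finally show ?thesis using B(4) yS dist by (intro exI[of _ "\<gamma> 0"]) auto
      qed
    qed
    have core1: "real (card B) * a / real DIM('a) \<le> (L / (2 * real N))\<^sup>2 * A"
      by (rule core[OF MZ Lpos B(1-3) cov])
    have "2 * a / real (d+1) \<le> real (card B) * a / real (d+1)"
      using cB assms(3) by (intro divide_right_mono mult_right_mono) auto
    also have "\<dots> \<le> (L / (2 * real N))\<^sup>2 * A" using core1 assms(2) by simp
    finally have I: "2 * a / real (d+1) \<le> (L / (2 * real N))\<^sup>2 * A" .
    have "8 * (real d - 1)^2 * r / (real d + 1) = 4 * (real N)\<^sup>2 / A * (2 * a / real (d+1))"
      using N by (simp add: r_def field_simps)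
    also have "\<dots> \<le> 4 * (real N)\<^sup>2 / A * ((L / (2 * real N))\<^sup>2 * A)" by (rule mult_left_mono[OF I]) (use Apos in auto)
    also have "\<dots> = L\<^sup>2" using Apos N by (simp add: field_simps power2_eq_square)
    finally have H: "8 * (real d - 1)^2 * r / (real d + 1) \<le> L\<^sup>2" .
    have x: "4 \<le> real d" using d4 by simp
    show ?thesis using final_big[OF x r L0 H] by (simp add: r_def)
  qed
qed

end
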